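(* (Variable Confidence Level Bound.) Let $L$ be a positive integer and $X_1,\dots,X_L$ i.i.d. random variables supported on $[0,1]$ with mean $\mu$. For any $a>0$ and $b>0$, \[ \Pr\Big(\forall t\in\{1,\dots,L\}:\ \Big|\frac1t\sum_{i=1}^tX_i-\mu\Big|\le\sqrt{\frac{a+b\ln(L/t)}{t}}\Big)\ge 1-\frac{2^{b/2+2}}{2^{b/2}-1}\exp(-a/2). \] *)

theory Defs
  imports "HOL-Probability.Probability"
begin

end

theory Submission
  imports Defs
begin


lemma (in prob_space) indep_var_nn_integral_mult:
  fixes X1 X2 :: "'a \<Rightarrow> real"
  assumes "indep_var borel X1 borel X2" "\<And>\<omega>. 0 \<le> X1 \<omega>" "\<And>\<omega>. 0 \<le> X2 \<omega>"
  shows "(\<integral>\<^sup>+\<omega>. ennreal (X1 \<omega> * X2 \<omega>) \<partial>M) = (\<integral>\<^sup>+\<omega>. X1 \<omega> \<partial>M) * (\<integral>\<^sup>+\<omega>. X2 \<omega> \<partial>M)"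
proof -
  define E1 where "E1 = (\<lambda>\<omega>. ennreal (X1 \<omega>))"
  define E2 where "E2 = (\<lambda>\<omega>. ennreal (X2 \<omega>))"
  have ie: "indep_var borel (ennreal \<circ> X1) borel (ennreal \<circ> X2)"
    by (rule indep_var_compose[OF assms(1)]) auto
  have ie2: "indep_var borel E1 borel E2"
    using ie by (simp add: E1_def E2_def comp_def)
  have **: "(\<lambda> _. borel) = case_bool borel borel"
    by (rule ext, metis (full_types) bool.simps(3) bool.simps(4))
  have ind: "indep_vars (\<lambda>_. borel) (case_bool E1 E2) UNIV"
    using ie2 unfolding indep_var_def ** .
  have "(\<integral>\<^sup>+\<omega>. ennreal (X1 \<omega> * X2 \<omega>) \<partial>M) = (\<integral>\<^sup>+\<omega>. (\<Prod>i\<in>UNIV. (case_bool E1 E2 i \<omega>)) \<partial>M)"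
    using assms(2,3) by (simp add: UNIV_bool mult.commute E1_def E2_def ennreal_mult)
  also have "\<dots> = (\<Prod>i\<in>UNIV. \<integral>\<^sup>+\<omega>. case_bool E1 E2 i \<omega> \<partial>M)"
    using indep_vars_nn_integral[of UNIV "case_bool E1 E2"] ind by (auto split: bool.split)
  also have "\<dots> = (\<integral>\<^sup>+\<omega>. X1 \<omega> \<partial>M) * (\<integral>\<^sup>+\<omega>. X2 \<omega> \<partial>M)"
    by (simp add: UNIV_bool mult.commute E1_def E2_def)
  finally show ?thesis .
qed

primrec Zf :: "real \<Rightarrow> nat \<Rightarrow> (nat \<Rightarrow> real) \<Rightarrow> real" where
  "Zf C 0 f = 1"
| "Zf C (Suc k) f = (if C \<le> Zf C k f then Zf C k f else Zf C k f * f (Suc k))"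

lemma Zf_cong: "(\<And>i. i \<in> {1..k} \<Longrightarrow> f i = g i) \<Longrightarrow> Zf C k f = Zf C k g"
  by (induction k) auto

lemma Zf_nonneg: "(\<And>i. 0 \<le> f i) \<Longrightarrow> 0 \<le> Zf C k f"
  by (induction k) auto

lemma Zf_meas: "{1..k} \<subseteq> I \<Longrightarrow> Zf C k \<in> borel_measurable (PiM I (\<lambda>_. borel))"
proof (induction k)
  case 0
  then show ?case by simp
next
  case (Suc k)
  have "{1..k} \<subseteq> I" using Suc.prems by auto
  then have [measurable]: "Zf C k \<in> borel_measurable (PiM I (\<lambda>_. borel))" using Suc.IH by auto
  have [measurable]: "(\<lambda>f. f (Suc k)) \<in> borel_measurable (PiM I (\<lambda>_. borel))"
    using Suc.prems by (intro measurable_component_singleton) auto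
  show ?case unfolding Zf.simps by measurable
qed

lemma Zf_prod: "C \<le> Zf C k f \<or> Zf C k f = (\<Prod>i=1..k. f i)"
proof (induction k)
  case (Suc k)
  then show ?case by (auto simp: prod.nat_ivl_Suc' mult.commute)
qed simp

lemma Zf_stay: "C \<le> Zf C k f \<Longrightarrow> k \<le> m \<Longrightarrow> C \<le> Zf C m f"
  by (induction m) (auto simp: le_Suc_eq)

lemma Zf_hit: "t \<le> n \<Longrightarrow> C \<le> (\<Prod>i=1..t. f i) \<Longrightarrow> C \<le> Zf C n f"
  using Zf_prod[of C t f] Zf_stay[of C t f n] by auto

lemma (in prob_space) ville_prod:
  fixes Y :: "nat \<Rightarrow> 'a \<Rightarrow> real"
  assumes ind: "indep_vars (\<lambda>_. borel) Y {1..n}"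
    and nn: "\<And>i \<omega>. 0 \<le> Y i \<omega>"
    and E: "\<And>i. i \<in> {1..n} \<Longrightarrow> (\<integral>\<^sup>+\<omega>. Y i \<omega> \<partial>M) \<le> 1"
    and C: "C > 0"
  shows "prob {\<omega>\<in>space M. \<exists>t\<in>{1..n}. C \<le> (\<Prod>i=1..t. Y i \<omega>)} \<le> 1 / C"
proof -
  define Z where "Z k \<omega> = Zf C k (\<lambda>i. Y i \<omega>)" for k \<omega>
  have rvY: "\<And>i. i \<in> {1..n} \<Longrightarrow> Y i \<in> borel_measurable M"
    using ind unfolding indep_vars_def by auto
  have Zr: "Z k \<omega> = Zf C k (restrict (\<lambda>i. Y i \<omega>) {1..k})" for k \<omega>
    unfolding Z_def by (rule Zf_cong) auto
  have Zmeas: "Z k \<in> borel_measurable M" if "k \<le> n" for k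
  proof -
    have "(\<lambda>\<omega>. Zf C k (restrict (\<lambda>i. Y i \<omega>) {1..k})) \<in> borel_measurable M"
      by (rule measurable_compose[OF measurable_restrict Zf_meas]) (use that rvY in auto)
    then show ?thesis unfolding Zr[abs_def] .
  qed
  have Znn: "0 \<le> Z k \<omega>" for k \<omega> unfolding Z_def by (rule Zf_nonneg) (rule nn)
  have step: "(\<integral>\<^sup>+\<omega>. Z k \<omega> \<partial>M) \<le> 1" if "k \<le> n" for k
    using that
  proof (induction k)
    case 0
    then show ?case by (simp add: Z_def emeasure_space_1)
  next
    case (Suc k)
    have kn: "k \<le> n" using Suc.prems by simp
    note [measurable] = Zmeas[OF kn]
    have [measurable]: "Y (Suc k) \<in> borel_measurable M" using Suc.prems by (intro rvY) auto
    define G where "G \<omega> = (if C \<le> Z k \<omega> then 0 else Z k \<omega>)" for \<omega>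
    define H where "H \<omega> = (if C \<le> Z k \<omega> then Z k \<omega> else 0)" for \<omega>
    have [measurable]: "G \<in> borel_measurable M" "H \<in> borel_measurable M"
      unfolding G_def H_def by measurable
    have Gnn: "0 \<le> G \<omega>" and Hnn: "0 \<le> H \<omega>" for \<omega> using Znn by (auto simp: G_def H_def)
    have split: "ennreal (Z (Suc k) \<omega>) = ennreal (H \<omega>) + ennreal (G \<omega> * Y (Suc k) \<omega>)" for \<omega>
      by (simp add: Z_def G_def H_def)
    have split2: "ennreal (Z k \<omega>) = ennreal (H \<omega>) + ennreal (G \<omega>)" for \<omega>
      by (simp add: G_def H_def)
    have indGY: "indep_var borel G borel (Y (Suc k))"
    proof -
      have i1: "indep_var (PiM {1..k} (\<lambda>_. borel)) (\<lambda>\<omega>. restrict (\<lambda>i. Y i \<omega>) {1..k})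
                   (PiM {Suc k} (\<lambda>_. borel)) (\<lambda>\<omega>. restrict (\<lambda>i. Y i \<omega>) {Suc k})"
        by (rule indep_var_restrict[OF ind]) (use Suc.prems in auto)
      have m1: "(\<lambda>f. if C \<le> Zf C k f then 0 else Zf C k f) \<in> borel_measurable (PiM {1..k} (\<lambda>_. borel))"
      proof -
        have [measurable]: "Zf C k \<in> borel_measurable (PiM {1..k} (\<lambda>_. borel))"
          by (rule Zf_meas) simp
        show ?thesis by measurable
      qed
      have m2: "(\<lambda>f. f (Suc k)) \<in> borel_measurable (PiM {Suc k} (\<lambda>_. borel::real measure))"
        by (rule measurable_component_singleton) simp
      have "indep_var borel ((\<lambda>f. if C \<le> Zf C k f then 0 else Zf C k f) \<circ> (\<lambda>\<omega>. restrict (\<lambda>i. Y i \<omega>) {1..k}))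
                borel ((\<lambda>f. f (Suc k)) \<circ> (\<lambda>\<omega>. restrict (\<lambda>i. Y i \<omega>) {Suc k}))"
        by (rule indep_var_compose[OF i1 m1 m2])
      moreover have "((\<lambda>f. if C \<le> Zf C k f then 0 else Zf C k f) \<circ> (\<lambda>\<omega>. restrict (\<lambda>i. Y i \<omega>) {1..k})) = G"
        by (rule ext) (simp add: G_def Zr)
      moreover have "((\<lambda>f. f (Suc k)) \<circ> (\<lambda>\<omega>. restrict (\<lambda>i. Y i \<omega>) {Suc k})) = Y (Suc k)"
        by (rule ext) simp
      ultimately show ?thesis by simp
    qed
    have "(\<integral>\<^sup>+\<omega>. Z (Suc k) \<omega> \<partial>M) = (\<integral>\<^sup>+\<omega>. ennreal (H \<omega>) + ennreal (G \<omega> * Y (Suc k) \<omega>) \<partial>M)"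
      by (simp add: split)
    also have "\<dots> = (\<integral>\<^sup>+\<omega>. H \<omega> \<partial>M) + (\<integral>\<^sup>+\<omega>. ennreal (G \<omega> * Y (Suc k) \<omega>) \<partial>M)"
      by (rule nn_integral_add) measurable
    also have "(\<integral>\<^sup>+\<omega>. ennreal (G \<omega> * Y (Suc k) \<omega>) \<partial>M) = (\<integral>\<^sup>+\<omega>. G \<omega> \<partial>M) * (\<integral>\<^sup>+\<omega>. Y (Suc k) \<omega> \<partial>M)"
      by (rule indep_var_nn_integral_mult[OF indGY Gnn nn])
    also have "\<dots> \<le> (\<integral>\<^sup>+\<omega>. G \<omega> \<partial>M) * 1"
      by (intro mult_left_mono E) (use Suc.prems in auto)
    also have "(\<integral>\<^sup>+\<omega>. H \<omega> \<partial>M) + (\<integral>\<^sup>+\<omega>. G \<omega> \<partial>M) * 1 = (\<integral>\<^sup>+\<omega>. ennreal (H \<omega>) + ennreal (G \<omega>) \<partial>M)"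
      by (simp add: nn_integral_add)
    also have "\<dots> = (\<integral>\<^sup>+\<omega>. Z k \<omega> \<partial>M)"
      by (simp add: split2)
    also have "\<dots> \<le> 1" using Suc.IH kn by simp
    finally show ?case by simp
  qed
  note [measurable] = Zmeas[OF order_refl]
  define S where "S = {\<omega>\<in>space M. C \<le> Z n \<omega>}"
  have Ssets: "S \<in> sets M" unfolding S_def by measurable
  have sub: "{\<omega>\<in>space M. \<exists>t\<in>{1..n}. C \<le> (\<Prod>i=1..t. Y i \<omega>)} \<subseteq> S"
    unfolding S_def Z_def using Zf_hit by fastforce
  have "ennreal C * emeasure M S = (\<integral>\<^sup>+\<omega>. ennreal C * indicator S \<omega> \<partial>M)"
    using Ssets by (simp add: nn_integral_cmult_indicator)
  also have "\<dots> \<le> (\<integral>\<^sup>+\<omega>. Z n \<omega> \<partial>M)"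
    by (intro nn_integral_mono) (auto simp: S_def indicator_def intro!: ennreal_leI)
  also have "\<dots> \<le> 1" by (rule step) simp
  finally have "ennreal C * ennreal (prob S) \<le> 1" by (simp add: emeasure_eq_measure)
  then have "C * prob S \<le> 1"
    using C by (simp flip: ennreal_mult)
  then have "prob S \<le> 1 / C" using C by (simp add: field_simps)
  moreover have "prob {\<omega>\<in>space M. \<exists>t\<in>{1..n}. C \<le> (\<Prod>i=1..t. Y i \<omega>)} \<le> prob S"
    by (rule finite_measure_mono[OF sub Ssets])
  ultimately show ?thesis by linarith
qed



lemma sets_Ex_finite:
  assumes "finite A" "\<And>t. t \<in> A \<Longrightarrow> {\<omega>\<in>space M. Q t \<omega>} \<in> sets M"
  shows "{\<omega>\<in>space M. \<exists>t\<in>A. Q t \<omega>} \<in> sets M"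
proof -
  have "{\<omega>\<in>space M. \<exists>t\<in>A. Q t \<omega>} = (\<Union>t\<in>A. {\<omega>\<in>space M. Q t \<omega>})" by auto
  also have "\<dots> \<in> sets M" using assms by (intro sets.finite_UN) auto
  finally show ?thesis .
qed

lemma exists_block:
  fixes t L :: nat
  assumes "1 \<le> t" "t \<le> L"
  shows "\<exists>j\<le>L. 2^j * t \<le> L \<and> L < 2^(Suc j) * t"
proof -
  define A where "A = {j. 2^j * t \<le> L}"
  have bound: "j \<le> L" if "j \<in> A" for j
  proof -
    have "j < 2^j" by (rule less_exp)
    also have "\<dots> \<le> 2^j * t" using assms by simp
    also have "\<dots> \<le> L" using that by (simp add: A_def)
    finally show ?thesis by simp
  qed
  have fin: "finite A" using bound by (meson finite_atMost finite_subset subsetI atMost_iff)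
  have ne: "0 \<in> A" using assms by (simp add: A_def)
  define j where "j = Max A"
  have jA: "j \<in> A" unfolding j_def using fin ne by (intro Max_in) auto
  have "Suc j \<notin> A" proof
    assume "Suc j \<in> A" then have "Suc j \<le> j" unfolding j_def using fin by (intro Max_ge) auto
    then show False by simp
  qed
  then show ?thesis using jA bound[OF jA] by (auto simp: A_def not_le intro!: exI[of _ j])
qed

lemma key_ineq:
  fixes t T cj ct D :: real
  assumes t: "0 < t" "t \<le> T" "T < 2*t" and c: "0 < cj" "cj \<le> ct" and D: "sqrt (ct/t) < D/t"
  shows "cj \<le> sqrt (8*cj/T) * D - t * (sqrt (8*cj/T))^2/8"
proof -
  have T: "T > 0" using t by simp
  have "sqrt (t*ct) = sqrt (t^2 * (ct/t))" using t by (simp add: power2_eq_square)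
  also have "\<dots> = sqrt (t^2) * sqrt (ct/t)" by (rule real_sqrt_mult)
  also have "\<dots> = t * sqrt (ct/t)" using t by simp
  finally have e1: "sqrt (t*ct) = t * sqrt (ct/t)" .
  have "t * sqrt (ct/t) < t * (D/t)" using t D by (intro mult_strict_left_mono) auto
  then have "sqrt (t*ct) < D" using e1 t by (simp add: field_simps)
  moreover have "sqrt (t*cj) \<le> sqrt (t*ct)" using t c by (simp add: real_sqrt_le_mono)
  ultimately have D2: "sqrt (t*cj) < D" by linarith
  have lpos: "sqrt (8*cj/T) > 0" using c T by simp
  have "sqrt (8*cj/T) * sqrt (t*cj) = sqrt (8*cj/T * (t*cj))" by (rule real_sqrt_mult[symmetric])
  also have "8*cj/T * (t*cj) = (8*t/T) * cj^2" by (simp add: power2_eq_square)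
  also have "sqrt \<dots> = sqrt (8*t/T) * sqrt (cj^2)" by (rule real_sqrt_mult)
  also have "\<dots> = sqrt (8*t/T) * cj" using c by simp
  finally have e2: "sqrt (8*cj/T) * sqrt (t*cj) = sqrt (8*t/T) * cj" .
  have "4 \<le> 8*t/T" using t T by (simp add: field_simps)
  then have "sqrt 4 \<le> sqrt (8*t/T)" by (rule real_sqrt_le_mono)
  then have s2: "2 \<le> sqrt (8*t/T)" by simp
  have "2*cj \<le> sqrt (8*cj/T) * sqrt (t*cj)" using e2 s2 c by (simp add: mult_right_mono)
  also have "\<dots> \<le> sqrt (8*cj/T) * D" using D2 lpos by simp
  finally have A: "2*cj \<le> sqrt (8*cj/T) * D" .
  have "t * (sqrt (8*cj/T))^2/8 = t*cj/T" using c T by simp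
  also have "\<dots> \<le> cj" using t c T by (simp add: field_simps)
  finally show ?thesis using A by simp
qed



lemma (in prob_space) one_sided:
  fixes X :: "nat \<Rightarrow> 'a \<Rightarrow> real" and L :: nat and \<mu> a b :: real
  assumes L: "L \<ge> 1"
    and ind: "indep_vars (\<lambda>_. borel) X {1..L}"
    and hoeff: "\<And>i l. i \<in> {1..L} \<Longrightarrow> l > 0 \<Longrightarrow> (\<integral>\<^sup>+\<omega>. exp (l * (X i \<omega> - \<mu>)) \<partial>M) \<le> exp (l^2/8)"
    and a: "a > 0" and b: "b > 0"
  shows "prob {\<omega>\<in>space M. \<exists>t\<in>{1..L}. sqrt ((a + b * ln (real L / real t)) / real t) < (\<Sum>i=1..t. X i \<omega>) / real t - \<mu>}
          \<le> exp (-a) / (1 - 2 powr (-b))"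
proof -
  define c where "c j = a + b * (real j * ln 2)" for j :: nat
  define T where "T j = real L / 2^j" for j :: nat
  define lam where "lam j = sqrt (8 * c j / T j)" for j :: nat
  define Y where "Y j i \<omega> = exp (lam j * (X i \<omega> - \<mu>) - (lam j)^2/8)" for j :: nat and i \<omega>
  define E where "E j = {\<omega>\<in>space M. \<exists>t\<in>{1..L}. exp (c j) \<le> (\<Prod>i=1..t. Y j i \<omega>)}" for j
  have rvX: "\<And>i. i \<in> {1..L} \<Longrightarrow> X i \<in> borel_measurable M"
    using ind unfolding indep_vars_def by auto
  have cpos: "c j > 0" for j
  proof -
    have "0 \<le> b * (real j * ln 2)" using b by (intro mult_nonneg_nonneg) auto
    then show ?thesis using a by (simp add: c_def)
  qed
  have Tpos: "T j > 0" for j using L by (simp add: T_def)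
  have lpos: "lam j > 0" for j using cpos[of j] Tpos[of j] by (simp add: lam_def)
  have Emeas: "E j \<in> sets M" for j
    unfolding E_def
  proof (rule sets_Ex_finite)
    fix t assume t: "t \<in> {1..L}"
    have "(\<lambda>\<omega>. \<Prod>i=1..t. Y j i \<omega>) \<in> borel_measurable M"
      unfolding Y_def
    proof (intro borel_measurable_prod)
      fix i assume "i \<in> {1..t}"
      then have [measurable]: "X i \<in> borel_measurable M" using t by (intro rvX) auto
      show "(\<lambda>x. exp (lam j * (X i x - \<mu>) - (lam j)\<^sup>2 / 8)) \<in> borel_measurable M" by measurable
    qed
    then show "{\<omega>\<in>space M. exp (c j) \<le> (\<Prod>i=1..t. Y j i \<omega>)} \<in> sets M" by measurable
  qed simp
  have probE: "prob (E j) \<le> exp (- c j)" for j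
  proof -
    have "prob (E j) \<le> 1 / exp (c j)"
      unfolding E_def
    proof (rule ville_prod)
      show "indep_vars (\<lambda>_. borel) (Y j) {1..L}"
        unfolding Y_def by (rule indep_vars_compose2[OF ind]) auto
      show "0 \<le> Y j i \<omega>" for i \<omega> by (simp add: Y_def)
      show "exp (c j) > 0" by simp
      fix i assume i: "i \<in> {1..L}"
      have "(\<integral>\<^sup>+\<omega>. Y j i \<omega> \<partial>M) = (\<integral>\<^sup>+\<omega>. ennreal (exp (lam j * (X i \<omega> - \<mu>))) * ennreal (exp (-((lam j)^2/8))) \<partial>M)"
      proof (intro nn_integral_cong)
        fix \<omega>
        have "Y j i \<omega> = exp (lam j * (X i \<omega> - \<mu>)) * exp (-((lam j)^2/8))"
          unfolding Y_def by (simp add: exp_add[symmetric])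
        then show "ennreal (Y j i \<omega>) = ennreal (exp (lam j * (X i \<omega> - \<mu>))) * ennreal (exp (-((lam j)^2/8)))"
          by (simp flip: ennreal_mult)
      qed
      also have "\<dots> = (\<integral>\<^sup>+\<omega>. ennreal (exp (lam j * (X i \<omega> - \<mu>))) \<partial>M) * ennreal (exp (-((lam j)^2/8)))"
      proof (intro nn_integral_multc)
        have [measurable]: "X i \<in> borel_measurable M" using i by (rule rvX)
        show "(\<lambda>x. ennreal (exp (lam j * (X i x - \<mu>)))) \<in> borel_measurable M" by measurable
      qed
      also have "\<dots> \<le> ennreal (exp ((lam j)^2/8)) * ennreal (exp (-((lam j)^2/8)))"
        by (intro mult_right_mono hoeff i lpos) auto
      also have "\<dots> = 1" by (simp flip: ennreal_mult add: exp_minus)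
      finally show "(\<integral>\<^sup>+\<omega>. Y j i \<omega> \<partial>M) \<le> 1" .
    qed
    then show ?thesis by (simp add: exp_minus field_simps)
  qed
  have sub: "{\<omega>\<in>space M. \<exists>t\<in>{1..L}. sqrt ((a + b * ln (real L / real t)) / real t) < (\<Sum>i=1..t. X i \<omega>) / real t - \<mu>}
     \<subseteq> (\<Union>j\<in>{..L}. E j)"
  proof safe
    fix \<omega> t assume \<omega>: "\<omega> \<in> space M" and t: "t \<in> {1..L}"
      and ev: "sqrt ((a + b * ln (real L / real t)) / real t) < (\<Sum>i=1..t. X i \<omega>) / real t - \<mu>"
    obtain j where j: "j \<le> L" "2^j * t \<le> L" "L < 2^(Suc j) * t"
      using exists_block[of t L] t by auto
    have tpos: "real t > 0" using t by simp
    have jt1: "real t \<le> T j"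
    proof -
      have "real (2^j * t) \<le> real L" using j(2) by linarith
      then show ?thesis unfolding T_def by (simp add: field_simps)
    qed
    have jt2: "T j < 2 * real t"
    proof -
      have "real L < real (2^(Suc j) * t)" using j(3) by linarith
      then show ?thesis unfolding T_def by (simp add: field_simps)
    qed
    have lnb: "real j * ln 2 \<le> ln (real L / real t)"
    proof -
      have "real j * ln 2 = ln (2^j)" by (simp add: ln_realpow)
      also have "\<dots> \<le> ln (real L / real t)"
      proof (rule ln_mono)
        show "(0::real) < 2^j" by simp
        have "real (2^j * t) \<le> real L" using j(2) by linarith
        then show "(2::real)^j \<le> real L / real t" using tpos by (simp add: field_simps)
      qed
      finally show ?thesis .
    qed
    have cle: "c j \<le> a + b * ln (real L / real t)"
      unfolding c_def using lnb b by (simp add: mult_left_mono)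
    have D: "sqrt ((a + b * ln (real L / real t)) / real t) < ((\<Sum>i=1..t. X i \<omega>) - real t * \<mu>) / real t"
      using ev tpos by (simp add: field_simps)
    have key: "c j \<le> lam j * ((\<Sum>i=1..t. X i \<omega>) - real t * \<mu>) - real t * (lam j)^2/8"
      unfolding lam_def by (rule key_ineq[OF tpos jt1 jt2 cpos cle D])
    have "(\<Prod>i=1..t. Y j i \<omega>) = exp (\<Sum>i=1..t. lam j * (X i \<omega> - \<mu>) - (lam j)^2/8)"
      unfolding Y_def by (simp add: exp_sum)
    also have "(\<Sum>i=1..t. lam j * (X i \<omega> - \<mu>) - (lam j)^2/8) = lam j * ((\<Sum>i=1..t. X i \<omega>) - real t * \<mu>) - real t * (lam j)^2/8"
      by (simp add: sum_subtractf sum_distrib_left right_diff_distrib)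
    finally have "exp (c j) \<le> (\<Prod>i=1..t. Y j i \<omega>)" using key by simp
    then show "\<omega> \<in> (\<Union>j\<in>{..L}. E j)" using j(1) t \<omega> unfolding E_def by blast
  qed
  have "prob {\<omega>\<in>space M. \<exists>t\<in>{1..L}. sqrt ((a + b * ln (real L / real t)) / real t) < (\<Sum>i=1..t. X i \<omega>) / real t - \<mu>}
      \<le> prob (\<Union>j\<in>{..L}. E j)"
    by (rule finite_measure_mono[OF sub]) (use Emeas in auto)
  also have "\<dots> \<le> (\<Sum>j\<in>{..L}. prob (E j))"
    by (rule finite_measure_subadditive_finite) (use Emeas in auto)
  also have "\<dots> \<le> (\<Sum>j\<in>{..L}. exp (-a) * (2 powr (-b))^j)"
  proof (rule sum_mono)
    fix j
    have "exp (- c j) = exp (-a) * exp (real j * (-b * ln 2))"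
      by (simp add: c_def exp_add[symmetric] algebra_simps)
    also have "exp (real j * (-b * ln 2)) = (2 powr (-b))^j"
      by (simp add: powr_def exp_of_nat_mult[symmetric] mult.commute)
    finally show "prob (E j) \<le> exp (-a) * (2 powr (-b))^j" using probE[of j] by simp
  qed
  also have "\<dots> = exp (-a) * (\<Sum>j<Suc L. (2 powr (-b))^j)"
    by (simp add: sum_distrib_left lessThan_Suc_atMost)
  also have "\<dots> \<le> exp (-a) / (1 - 2 powr (-b))"
  proof -
    have q: "2 powr (-b) < 1" "0 < 2 powr (-b)" using b by (auto simp: powr_less_one)
    have "(\<Sum>j<Suc L. (2 powr (-b))^j) = (1 - (2 powr (-b))^Suc L) / (1 - 2 powr (-b))"
      using q by (subst sum_gp_strict) auto
    also have "\<dots> \<le> 1 / (1 - 2 powr (-b))"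
      using q by (intro divide_right_mono) auto
    finally show ?thesis by (simp add: mult_left_mono divide_inverse)
  qed
  finally show ?thesis .
qed



lemma final_ineq:
  fixes p e :: real
  assumes "1 < p" "0 < e" "e \<le> 1"
  shows "2 * e^2 / (1 - 1/p^2) \<le> 4*p/(p-1) * e"
proof -
  have p2: "p^2 - 1 = (p-1)*(p+1)" by (simp add: power2_eq_square algebra_simps)
  have "1 - 1/p^2 = (p-1)*(p+1)/p^2" using assms p2 by (simp add: field_simps)
  then have "2 * e^2 / (1 - 1/p^2) = 2*e^2*p^2/((p-1)*(p+1))" by simp
  also have "\<dots> = (4*p/(p-1) * e) * (e*p/(2*(p+1)))"
  proof -
    have "p - 1 \<noteq> 0" "p + 1 \<noteq> 0" using assms by auto
    moreover have "p*p - 1 > 0" using assms by (metis less_1_mult diff_gt_0_iff_gt)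
    moreover have "p*(p*2) - 2 = 2*(p*p-1)" by simp
    ultimately show ?thesis by (simp add: field_simps power2_eq_square)
  qed
  also have "\<dots> \<le> (4*p/(p-1) * e) * 1"
  proof (rule mult_left_mono)
    have "e*p \<le> 1*p" using assms by (intro mult_right_mono) auto
    then have "e*p \<le> p" by simp
    moreover have "p \<le> 2*(p+1)" using assms by simp
    ultimately have "e*p \<le> 2*(p+1)" by (rule order_trans)
    then show "e*p/(2*(p+1)) \<le> 1" using assms by (simp add: pos_divide_le_eq)
    show "0 \<le> 4*p/(p-1)*e" using assms by simp
  qed
  finally show ?thesis by simp
qed


theorem lemma11:
  fixes M :: "'a measure" and X :: "nat \<Rightarrow> 'a \<Rightarrow> real"
    and L :: nat and \<mu> a b :: real
  assumes "prob_space M"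
    and "L \<ge> 1"
    and "\<And>i. i \<in> {1..L} \<Longrightarrow> X i \<in> borel_measurable M"
    and "prob_space.indep_vars M (\<lambda>_. borel) X {1..L}"
    and "\<And>i. i \<in> {1..L} \<Longrightarrow> distr M borel (X i) = distr M borel (X 1)"
    and "\<And>i. i \<in> {1..L} \<Longrightarrow> (AE \<omega> in M. X i \<omega> \<in> {0..1})"
    and "\<And>i. i \<in> {1..L} \<Longrightarrow> prob_space.expectation M (X i) = \<mu>"
    and "a > 0" and "b > 0"
  shows "measure M {\<omega> \<in> space M. \<forall>t\<in>{1..L}.
            \<bar>(\<Sum>i=1..t. X i \<omega>) / real t - \<mu>\<bar> \<le> sqrt ((a + b * ln (real L / real t)) / real t)}
         \<ge> 1 - (2 powr (b/2 + 2) / (2 powr (b/2) - 1)) * exp (-a/2)"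
proof -
  interpret prob_space M by (rule assms(1))
  note rvX = assms(3)
  note ind = assms(4)
  define r where "r t = sqrt ((a + b * ln (real L / real t)) / real t)" for t :: nat
  define Up where "Up = {\<omega>\<in>space M. \<exists>t\<in>{1..L}. r t < (\<Sum>i=1..t. X i \<omega>) / real t - \<mu>}"
  define Dn where "Dn = {\<omega>\<in>space M. \<exists>t\<in>{1..L}. r t < (\<Sum>i=1..t. - X i \<omega>) / real t - - \<mu>}"
  have hU: "prob Up \<le> exp (-a) / (1 - 2 powr (-b))"
    unfolding Up_def r_def
  proof (rule one_sided[OF assms(2) ind _ assms(8,9)])
    fix i l assume i: "i \<in> {1..L}" and l: "(l::real) > 0"
    interpret H: interval_bounded_random_variable M "X i" 0 1
      by unfold_locales (use rvX[OF i] assms(6)[OF i] in auto)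
    have "(\<integral>\<^sup>+x. exp (l * (X i x - expectation (X i))) \<partial>M) \<le> ennreal (exp (l\<^sup>2 * (1 - 0)\<^sup>2 / 8))"
      by (rule H.Hoeffdings_lemma_nn_integral[OF l])
    then show "(\<integral>\<^sup>+\<omega>. exp (l * (X i \<omega> - \<mu>)) \<partial>M) \<le> ennreal (exp (l^2/8))"
      using assms(7)[OF i] by simp
  qed
  have ind2: "indep_vars (\<lambda>_. borel) (\<lambda>i x. - X i x) {1..L}"
    by (rule indep_vars_compose2[OF ind]) auto
  have hD: "prob Dn \<le> exp (-a) / (1 - 2 powr (-b))"
    unfolding Dn_def r_def
  proof (rule one_sided[OF assms(2) ind2 _ assms(8,9)])
    fix i l assume i: "i \<in> {1..L}" and l: "(l::real) > 0"
    interpret H: interval_bounded_random_variable M "\<lambda>x. - X i x" "-1" 0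
      by unfold_locales (use rvX[OF i] assms(6)[OF i] in \<open>auto elim!: eventually_mono\<close>)
    have "(\<integral>\<^sup>+x. exp (l * (- X i x - expectation (\<lambda>x. - X i x))) \<partial>M) \<le> ennreal (exp (l\<^sup>2 * (0 - -1)\<^sup>2 / 8))"
      by (rule H.Hoeffdings_lemma_nn_integral[OF l])
    then show "(\<integral>\<^sup>+\<omega>. exp (l * (- X i \<omega> - - \<mu>)) \<partial>M) \<le> ennreal (exp (l^2/8))"
      using assms(7)[OF i] by simp
  qed
  have meas: "{\<omega>\<in>space M. r t < f (\<Sum>i=1..t. g (X i \<omega>)) }\<in> sets M"
    if t: "t \<in> {1..L}" and [measurable]: "f \<in> borel_measurable borel" "g \<in> borel_measurable borel" for t and f g :: "real \<Rightarrow> real"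
  proof -
    have "(\<lambda>\<omega>. \<Sum>i=1..t. g (X i \<omega>)) \<in> borel_measurable M"
    proof (intro borel_measurable_sum)
      fix i assume "i \<in> {1..t}"
      then have [measurable]: "X i \<in> borel_measurable M" using t by (intro rvX) auto
      show "(\<lambda>\<omega>. g (X i \<omega>)) \<in> borel_measurable M" by measurable
    qed
    then show ?thesis by measurable
  qed
  have UpM: "Up \<in> sets M" unfolding Up_def
  proof (rule sets_Ex_finite)
    fix t assume t: "t \<in> {1..L}"
    have m1: "(\<lambda>s. s / real t - \<mu>) \<in> borel_measurable borel" by measurable
    have m2: "(\<lambda>s::real. s) \<in> borel_measurable borel" by measurable
    show "{\<omega>\<in>space M. r t < (\<Sum>i=1..t. X i \<omega>) / real t - \<mu>} \<in> sets M"
      using meas[OF t m1 m2] by simp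
  qed simp
  have DnM: "Dn \<in> sets M" unfolding Dn_def
  proof (rule sets_Ex_finite)
    fix t assume t: "t \<in> {1..L}"
    have m1: "(\<lambda>s. s / real t - - \<mu>) \<in> borel_measurable borel" by measurable
    have m2: "(\<lambda>s::real. - s) \<in> borel_measurable borel" by measurable
    show "{\<omega>\<in>space M. r t < (\<Sum>i=1..t. - X i \<omega>) / real t - - \<mu>} \<in> sets M"
      using meas[OF t m1 m2] by simp
  qed simp
  have G: "{\<omega> \<in> space M. \<forall>t\<in>{1..L}.
            \<bar>(\<Sum>i=1..t. X i \<omega>) / real t - \<mu>\<bar> \<le> sqrt ((a + b * ln (real L / real t)) / real t)}
           = space M - (Up \<union> Dn)"
  proof -
    have e: "(\<Sum>i=1..t. - X i \<omega>) / real t - - \<mu> = - ((\<Sum>i=1..t. X i \<omega>) / real t - \<mu>)" for t \<omega>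
      by (simp add: sum_negf field_simps)
    show ?thesis
    proof (intro set_eqI iffI)
      fix \<omega> assume "\<omega> \<in> {\<omega> \<in> space M. \<forall>t\<in>{1..L}.
            \<bar>(\<Sum>i=1..t. X i \<omega>) / real t - \<mu>\<bar> \<le> sqrt ((a + b * ln (real L / real t)) / real t)}"
      then have w: "\<omega> \<in> space M" "\<And>t. t \<in> {1..L} \<Longrightarrow> \<bar>(\<Sum>i=1..t. X i \<omega>) / real t - \<mu>\<bar> \<le> r t"
        unfolding r_def by auto
      show "\<omega> \<in> space M - (Up \<union> Dn)"
        unfolding Up_def Dn_def e using w by (auto dest!: w(2) simp: abs_le_iff not_less)
    next
      fix \<omega> assume "\<omega> \<in> space M - (Up \<union> Dn)"
      then have w: "\<omega> \<in> space M" "\<And>t. t \<in> {1..L} \<Longrightarrow> \<not> r t < (\<Sum>i=1..t. X i \<omega>) / real t - \<mu>"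
         "\<And>t. t \<in> {1..L} \<Longrightarrow> \<not> r t < - ((\<Sum>i=1..t. X i \<omega>) / real t - \<mu>)"
        unfolding Up_def Dn_def e by auto
      show "\<omega> \<in> {\<omega> \<in> space M. \<forall>t\<in>{1..L}.
            \<bar>(\<Sum>i=1..t. X i \<omega>) / real t - \<mu>\<bar> \<le> sqrt ((a + b * ln (real L / real t)) / real t)}"
        using w unfolding r_def[symmetric] by (auto simp: abs_le_iff not_less)
    qed
  qed
  have "1 - (exp (-a) / (1 - 2 powr (-b)) + exp (-a) / (1 - 2 powr (-b))) \<le> 1 - (prob Up + prob Dn)"
    using hU hD by linarith
  also have "\<dots> \<le> 1 - prob (Up \<union> Dn)"
  proof -
    have f1: "emeasure M Up \<noteq> \<infinity>" "emeasure M Dn \<noteq> \<infinity>" using emeasure_finite[of Up] emeasure_finite[of Dn] by auto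
    show ?thesis using measure_subadditive[OF UpM DnM f1] by linarith
  qed
  also have "\<dots> = prob (space M - (Up \<union> Dn))"
    using UpM DnM by (simp add: prob_compl)
  finally have main: "1 - 2 * exp (-a) / (1 - 2 powr (-b)) \<le> prob (space M - (Up \<union> Dn))" by simp
  define p where "p = 2 powr (b/2)"
  define e where "e = exp (-a/2)"
  have p1: "1 < p" unfolding p_def using assms(9) by simp
  have e1: "0 < e" "e \<le> 1" unfolding e_def using assms(8) by auto
  have q: "2 powr (-b) = 1/p^2"
  proof -
    have "p^2 = 2 powr (real 2 * (b/2))" unfolding p_def by (rule powr_power) simp
    also have "\<dots> = 2 powr b" by simp
    finally show ?thesis by (simp add: powr_minus_divide)
  qed
  have ea: "exp (-a) = e^2" unfolding e_def by (simp add: exp_double[symmetric] power2_eq_square exp_add[symmetric])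
  have p4: "2 powr (b/2 + 2) = 4 * p" unfolding p_def by (simp add: powr_add)
  have "2 * exp (-a) / (1 - 2 powr (-b)) \<le> (2 powr (b/2 + 2) / (2 powr (b/2) - 1)) * exp (-a/2)"
    unfolding q ea p4 p_def[symmetric] e_def[symmetric] using final_ineq[OF p1 e1] by simp
  then show ?thesis using main G by simp
qed

end
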